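(* Let $M\ge1$, $\alpha\in(0,1)$, $R_{th}>0$ and $\varepsilon=2^{2R_{th}/(1-\alpha)}-1$. For each $m\in\{1,\dots,M\}$ and each link $j\in\{SR_m,R_mD\}$ let IQI parameters $\xi_{t_j},\xi_{r_j}>0$, $\phi_{t_j},\phi_{r_j}\in\mathbb{R}$ be given, with $\mu_{t_j}=\tfrac12(1+\xi_{t_j}e^{i\phi_{t_j}})$, $v_{t_j}=\tfrac12(1-\xi_{t_j}e^{-i\phi_{t_j}})$, $\mu_{r_j}=\tfrac12(1+\xi_{r_j}e^{-i\phi_{r_j}})$, $v_{r_j}=\tfrac12(1-\xi_{r_j}e^{i\phi_{r_j}})$, $p_j=|\mu_{t_j}\mu_{r_j}+v_{t_j}^*v_{r_j}|^2$, $q_j=|\mu_{r_j}v_{t_j}+\mu_{t_j}^*v_{r_j}|^2$, and assume $p_j-\varepsilon q_j>0$. Let the random variables $X_j$, $j\in\{SR_m,R_mD: 1\le m\le M\}$, be mutually independent with $X_j$ exponential of rate $\lambda_j>0$, and let all estimation-error variances equal $t>0$: $\sigma^2_{e_j}=t$. Define $$C^\infty_j=\frac{1-\alpha}{2}\log_2\!\Big(1+\frac{X_jp_j}{\sigma^2_{e_j}p_j+X_jq_j+\sigma^2_{e_j}q_j}\Big).$$ Then $$\Pr\Big\{\max_{1\le m\le M}\min(C^\infty_{SR_m},C^\infty_{R_mD})<R_{th}\Big\}=\prod_{m=1}^M\Big(1-e^{-\lambda_{SR_m}H_{1,m}-\lambda_{R_mD}H_{2,m}}\Big),$$ where $H_{1,m}=\dfrac{\varepsilon\sigma^2_{e_{SR_m}}(p_{SR_m}+q_{SR_m})}{p_{SR_m}-\varepsilon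 q_{SR_m}}$ and $H_{2,m}=\dfrac{\varepsilon\sigma^2_{e_{R_mD}}(p_{R_mD}+q_{R_mD})}{p_{R_mD}-\varepsilon q_{R_mD}}$.
   Context: Decode-and-forward relaying with $M$ relays and optimal relay selection: the relay maximizing the end-to-end capacity $\min(C_{SR_m},C_{R_mD})$ is selected. $X_j=|\hat h_j|^2$ are estimated Rayleigh channel gains, $\sigma^2_{e_j}$ channel-estimation-error variances, $p_j,q_j$ the I/Q-imbalance gain coefficients. The left-hand side is the asymptotic (high-SNR) outage probability; $z^*$ is complex conjugate, $i$ the imaginary unit. *)

theory Defs
  imports "HOL-Probability.Probability"
begin

text \<open>IQI coefficients. Links are indexed by pairs (m, b): (m, True) is the link S-R_m,
  (m, False) is the link R_m-D.\<close>

definition mu_t :: "real \<Rightarrow> real \<Rightarrow> complex" where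
  "mu_t xi phi = (1 + complex_of_real xi * cis phi) / 2"
definition v_t :: "real \<Rightarrow> real \<Rightarrow> complex" where
  "v_t xi phi = (1 - complex_of_real xi * cis (- phi)) / 2"
definition mu_r :: "real \<Rightarrow> real \<Rightarrow> complex" where
  "mu_r xi phi = (1 + complex_of_real xi * cis (- phi)) / 2"
definition v_r :: "real \<Rightarrow> real \<Rightarrow> complex" where
  "v_r xi phi = (1 - complex_of_real xi * cis phi) / 2"

definition iqi_p :: "real \<Rightarrow> real \<Rightarrow> real \<Rightarrow> real \<Rightarrow> real" where
  "iqi_p xt pt xr pr =
     (cmod (mu_t xt pt * mu_r xr pr + cnj (v_t xt pt) * v_r xr pr))\<^sup>2"
definition iqi_q :: "real \<Rightarrow> real \<Rightarrow> real \<Rightarrow> real \<Rightarrow> real" where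
  "iqi_q xt pt xr pr =
     (cmod (mu_r xr pr * v_t xt pt + cnj (mu_t xt pt) * v_r xr pr))\<^sup>2"

definition cap_inf :: "real \<Rightarrow> real \<Rightarrow> real \<Rightarrow> real \<Rightarrow> real \<Rightarrow> real" where
  "cap_inf \<alpha> s p q x = (1 - \<alpha>) / 2 * log 2 (1 + x * p / (s * p + x * q + s * q))"

definition thr_eps :: "real \<Rightarrow> real \<Rightarrow> real" where
  "thr_eps \<alpha> Rth = 2 powr (2 * Rth / (1 - \<alpha>)) - 1"

definition H_coef :: "real \<Rightarrow> real \<Rightarrow> real \<Rightarrow> real \<Rightarrow> real" where
  "H_coef \<epsilon> s p q = \<epsilon> * s * (p + q) / (p - \<epsilon> * q)"

end

theory Submission
  imports Defs
begin
lemma cap_iff: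
  assumes a0: "0 < \<alpha>" and a1: "\<alpha> < 1" and R: "Rth > 0" and t: "t > 0"
    and p: "p \<ge> 0" and q: "q \<ge> 0" and pq: "p - thr_eps \<alpha> Rth * q > 0" and x: "x \<ge> 0"
  shows "cap_inf \<alpha> t p q x < Rth \<longleftrightarrow> x < H_coef (thr_eps \<alpha> Rth) t p q"
proof -
  define e where "e = thr_eps \<alpha> Rth"
  have epos: "e > 0" unfolding e_def thr_eps_def using a1 R
    by simp
  have ppos: "p > 0" using pq epos q e_def
    by (smt (verit) mult_nonneg_nonneg)
  have den: "t * p + x * q + t * q > 0" using t ppos q x
    by (smt (verit) mult_nonneg_nonneg mult_pos_pos)
  have y0: "x * p / (t * p + x * q + t * q) \<ge> 0" using den x p by simp
  have "cap_inf \<alpha> t p q x < Rth \<longleftrightarrow> log 2 (1 + x * p / (t * p + x * q + t * q)) < 2 * Rth / (1 - \<alpha>)"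
    unfolding cap_inf_def using a1 by (simp add: field_simps)
  also have "\<dots> \<longleftrightarrow> 1 + x * p / (t * p + x * q + t * q) < 2 powr (2 * Rth / (1 - \<alpha>))"
    using y0 by (subst log_less_iff) auto
  also have "\<dots> \<longleftrightarrow> x * p / (t * p + x * q + t * q) < e"
    unfolding e_def thr_eps_def by linarith
  also have "\<dots> \<longleftrightarrow> x * p < e * (t * p + x * q + t * q)"
    using den by (simp add: divide_less_eq)
  also have "\<dots> \<longleftrightarrow> x * (p - e * q) < e * t * (p + q)"
    by (simp add: algebra_simps)
  also have "\<dots> \<longleftrightarrow> x < H_coef e t p q"
    unfolding H_coef_def using pq e_def by (simp add: less_divide_eq mult.commute)
  finally show ?thesis unfolding e_def .
qed
theorem corollary5:
  fixes P :: "'a measure"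
    and M :: nat and \<alpha> Rth t :: real
    and xit xir phit phir lam :: "nat \<times> bool \<Rightarrow> real"
    and X :: "nat \<times> bool \<Rightarrow> 'a \<Rightarrow> real"
  assumes "prob_space P"
    and "M \<ge> 1" and "0 < \<alpha>" and "\<alpha> < 1" and "Rth > 0" and "t > 0"
    and "\<And>j. j \<in> {1..M} \<times> UNIV \<Longrightarrow> xit j > 0 \<and> xir j > 0"
    and "\<And>j. j \<in> {1..M} \<times> UNIV \<Longrightarrow>
           iqi_p (xit j) (phit j) (xir j) (phir j)
             - thr_eps \<alpha> Rth * iqi_q (xit j) (phit j) (xir j) (phir j) > 0"
    and "\<And>j. j \<in> {1..M} \<times> UNIV \<Longrightarrow> lam j > 0"
    and "\<And>j. j \<in> {1..M} \<times> UNIV \<Longrightarrow> distributed P lborel (X j) (exponential_density (lam j))"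
    and "prob_space.indep_vars P (\<lambda>_. borel) X ({1..M} \<times> UNIV)"
  shows "measure P {\<omega> \<in> space P.
            Max ((\<lambda>m. min (cap_inf \<alpha> t (iqi_p (xit (m,True)) (phit (m,True)) (xir (m,True)) (phir (m,True)))
                                     (iqi_q (xit (m,True)) (phit (m,True)) (xir (m,True)) (phir (m,True)))
                                     (X (m,True) \<omega>))
                           (cap_inf \<alpha> t (iqi_p (xit (m,False)) (phit (m,False)) (xir (m,False)) (phir (m,False)))
                                     (iqi_q (xit (m,False)) (phit (m,False)) (xir (m,False)) (phir (m,False)))
                                     (X (m,False) \<omega>))) ` {1..M}) < Rth}
         = (\<Prod>m = 1..M. 1 - exp (
              - lam (m,True) * H_coef (thr_eps \<alpha> Rth) t
                   (iqi_p (xit (m,True)) (phit (m,True)) (xir (m,True)) (phir (m,True)))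
                   (iqi_q (xit (m,True)) (phit (m,True)) (xir (m,True)) (phir (m,True)))
              - lam (m,False) * H_coef (thr_eps \<alpha> Rth) t
                   (iqi_p (xit (m,False)) (phit (m,False)) (xir (m,False)) (phir (m,False)))
                   (iqi_q (xit (m,False)) (phit (m,False)) (xir (m,False)) (phir (m,False)))))"
proof -
  interpret prob_space P by fact
  define p where "p j = iqi_p (xit j) (phit j) (xir j) (phir j)" for j
  define q where "q j = iqi_q (xit j) (phit j) (xir j) (phir j)" for j
  define e where "e = thr_eps \<alpha> Rth"
  define H where "H j = H_coef e t (p j) (q j)" for j
  define I where "I = {1..M} \<times> (UNIV :: bool set)"
  have finI: "finite I" unfolding I_def by simp
  have epos: "e > 0" unfolding e_def thr_eps_def using assms(4,5) by simp
  have p0: "p j \<ge> 0" and q0: "q j \<ge> 0" for j unfolding p_def q_def iqi_p_def iqi_q_def by simp_all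
  have pq: "j \<in> I \<Longrightarrow> p j - e * q j > 0" for j using assms(8) unfolding I_def p_def q_def e_def by blast
  have H0: "j \<in> I \<Longrightarrow> H j \<ge> 0" for j
  proof -
    assume j: "j \<in> I"
    have "p j > 0" using pq[OF j] epos q0[of j] by (smt (verit) mult_nonneg_nonneg)
    then show ?thesis unfolding H_def H_coef_def using pq[OF j] epos q0[of j] assms(6) by simp
  qed
  have lam: "j \<in> I \<Longrightarrow> lam j > 0" for j using assms(9) unfolding I_def by blast
  have D: "j \<in> I \<Longrightarrow> distributed P lborel (X j) (exponential_density (lam j))" for j
    using assms(10) unfolding I_def by blast
  have Xm: "j \<in> I \<Longrightarrow> X j \<in> borel_measurable P" for j
    using assms(11) unfolding I_def indep_vars_def by blast
  have ind: "indep_vars (\<lambda>_. borel) X I" using assms(11) unfolding I_def .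
  have capiff: "j \<in> I \<Longrightarrow> x \<ge> 0 \<Longrightarrow> cap_inf \<alpha> t (p j) (q j) x < Rth \<longleftrightarrow> x < H j" for j x
    unfolding H_def e_def using cap_iff[OF assms(3,4,5,6) p0 q0 pq[unfolded e_def]] by blast
  have AEj: "AE \<omega> in P. X j \<omega> \<ge> 0 \<and> X j \<omega> \<noteq> H j" if j: "j \<in> I" for j
  proof -
    have "AE x in lborel. 0 < exponential_density (lam j) x \<longrightarrow> 0 \<le> x \<and> x \<noteq> H j"
      using AE_lborel_singleton[of "H j"] by eventually_elim (auto simp: exponential_density_def)
    then show ?thesis using distributed_AE2[OF D[OF j], of "\<lambda>x. 0 \<le> x \<and> x \<noteq> H j"] by simp
  qed
  have AEall: "AE \<omega> in P. \<forall>j\<in>I. X j \<omega> \<ge> 0 \<and> X j \<omega> \<noteq> H j"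
    by (rule AE_finite_allI[OF finI]) (rule AEj)
  define Y where "Y m \<omega> = (X (m,True) \<omega>, X (m,False) \<omega>)" for m \<omega>
  define A where "A m = {z::real\<times>real. fst z < H (m,True) \<or> snd z < H (m,False)}" for m
  define K where "K m = {(m,True),(m,False)}" for m :: nat
  have indR: "indep_vars (\<lambda>m. PiM (K m) (\<lambda>_. borel)) (\<lambda>m \<omega>. restrict (\<lambda>i. X i \<omega>) (K m)) {1..M}"
    by (rule indep_vars_restrict[OF ind]) (auto simp: K_def I_def disjoint_family_on_def)
  have indY0: "indep_vars (\<lambda>_. borel \<Otimes>\<^sub>M borel) (\<lambda>m \<omega>. (\<lambda>f. (f (m,True), f (m,False))) (restrict (\<lambda>i. X i \<omega>) (K m))) {1..M}"
    by (rule indep_vars_compose2[OF indR]) (auto simp: K_def)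
  have indY: "indep_vars (\<lambda>_. borel \<Otimes>\<^sub>M borel) Y {1..M}"
    using indY0 by (subst indep_vars_cong[where Y="\<lambda>m \<omega>. (\<lambda>f. (f (m,True), f (m,False))) (restrict (\<lambda>i. X i \<omega>) (K m))" and N'="\<lambda>_. borel \<Otimes>\<^sub>M borel"]) (auto simp: Y_def K_def fun_eq_iff)
  have Asets: "A m \<in> sets (borel \<Otimes>\<^sub>M borel)" for m
  proof -
    have "A m = {z \<in> space (borel \<Otimes>\<^sub>M borel). fst z < H (m,True) \<or> snd z < H (m,False)}"
      by (simp add: A_def space_pair_measure)
    also have "\<dots> \<in> sets (borel \<Otimes>\<^sub>M borel)" by measurable
    finally show ?thesis .
  qed
  note Xm' = Xm[unfolded I_def, simplified]
  define E where "E = (\<Inter>m\<in>{1..M}. Y m -` A m \<inter> space P)"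
  have Ym: "m \<in> {1..M} \<Longrightarrow> Y m \<in> measurable P (borel \<Otimes>\<^sub>M borel)" for m
    unfolding Y_def using Xm' by (auto intro!: measurable_Pair)
  have Eev: "E \<in> events" unfolding E_def using Ym Asets assms(2)
    by (intro sets.finite_INT) (auto intro: measurable_sets)
  have Sev: "{\<omega> \<in> space P.
            Max ((\<lambda>m. min (cap_inf \<alpha> t (p (m,True)) (q (m,True)) (X (m,True) \<omega>))
                           (cap_inf \<alpha> t (p (m,False)) (q (m,False)) (X (m,False) \<omega>))) ` {1..M}) < Rth} \<in> events"
    (is "?S \<in> _")
  proof -
    have [measurable]: "m \<in> {1..M} \<Longrightarrow> X (m, b) \<in> borel_measurable P" for m b using Xm' by simp
    show ?thesis unfolding cap_inf_def by measurable
  qed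
  have SE: "prob ?S = prob E"
  proof (rule measure_eq_AE[OF _ Sev Eev])
    show "AE \<omega> in P. (\<omega> \<in> ?S) = (\<omega> \<in> E)"
      using AEall
    proof eventually_elim
      case (elim \<omega>)
      have fin: "finite ((\<lambda>m. min (cap_inf \<alpha> t (p (m,True)) (q (m,True)) (X (m,True) \<omega>))
                           (cap_inf \<alpha> t (p (m,False)) (q (m,False)) (X (m,False) \<omega>))) ` {1..M})"
        by simp
      have ne: "{1..M} \<noteq> {}" using assms(2) by simp
      have "(\<omega> \<in> ?S) \<longleftrightarrow> \<omega> \<in> space P \<and> (\<forall>m\<in>{1..M}. min (cap_inf \<alpha> t (p (m,True)) (q (m,True)) (X (m,True) \<omega>))
                           (cap_inf \<alpha> t (p (m,False)) (q (m,False)) (X (m,False) \<omega>)) < Rth)"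
        using Max_less_iff[OF fin] ne by simp
      also have "\<dots> \<longleftrightarrow> \<omega> \<in> E"
      proof -
        have "min (cap_inf \<alpha> t (p (m,True)) (q (m,True)) (X (m,True) \<omega>))
                           (cap_inf \<alpha> t (p (m,False)) (q (m,False)) (X (m,False) \<omega>)) < Rth
              \<longleftrightarrow> Y m \<omega> \<in> A m" if m: "m \<in> {1..M}" for m
        proof -
          have jT: "(m,True) \<in> I" and jF: "(m,False) \<in> I" using m by (auto simp: I_def)
          show ?thesis unfolding min_less_iff_disj Y_def A_def
            using capiff[OF jT] capiff[OF jF] elim jT jF by auto
        qed
        then show ?thesis unfolding E_def using ne by auto
      qed
      finally show ?case .
    qed
  qed
  have EP: "prob E = (\<Prod>m\<in>{1..M}. prob (Y m -` A m \<inter> space P))"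
    unfolding E_def using assms(2) Asets by (intro indep_varsD_finite[OF indY]) auto
  have gt: "prob (X j -` {H j..} \<inter> space P) = exp (- H j * lam j)" if j: "j \<in> I" for j
  proof -
    have "prob (X j -` {H j..} \<inter> space P) = \<P>(x in P. H j < X j x)"
    proof (rule measure_eq_AE)
      show "AE x in P. (x \<in> X j -` {H j..} \<inter> space P) = (x \<in> {x \<in> space P. H j < X j x})"
        using AEj[OF j] by eventually_elim auto
      show "X j -` {H j..} \<inter> space P \<in> events" using Xm[OF j] by measurable
      show "{x \<in> space P. H j < X j x} \<in> events" using Xm[OF j] by measurable
    qed
    also have "\<dots> = exp (- H j * lam j)"
      by (rule exponential_distributedD_gt[OF D[OF j] H0[OF j] lam[OF j]])
    finally show ?thesis .
  qed
  have termeq: "prob (Y m -` A m \<inter> space P) = 1 - exp (- lam (m,True) * H (m,True) - lam (m,False) * H (m,False))"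
    if m: "m \<in> {1..M}" for m
  proof -
    have jT: "(m,True) \<in> I" and jF: "(m,False) \<in> I" using m by (auto simp: I_def)
    let ?J = "{(m,True),(m,False)}"
    have "Y m -` A m \<inter> space P = space P - (\<Inter>j\<in>?J. X j -` {H j..} \<inter> space P)"
      by (auto simp: Y_def A_def)
    moreover have "(\<Inter>j\<in>?J. X j -` {H j..} \<inter> space P) \<in> events"
      using measurable_sets[OF Xm[OF jT], of "{H (m,True)..}"] measurable_sets[OF Xm[OF jF], of "{H (m,False)..}"]
      by (simp add: sets.Int)
    moreover have "prob (\<Inter>j\<in>?J. X j -` {H j..} \<inter> space P) = (\<Prod>j\<in>?J. prob (X j -` {H j..} \<inter> space P))"
      by (rule indep_varsD[OF ind]) (use jT jF in auto)
    ultimately have "prob (Y m -` A m \<inter> space P) = 1 - (\<Prod>j\<in>?J. prob (X j -` {H j..} \<inter> space P))"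
      by (simp add: prob_compl)
    also have "\<dots> = 1 - exp (- H (m,True) * lam (m,True)) * exp (- H (m,False) * lam (m,False))"
      using gt[OF jT] gt[OF jF] by simp
    also have "\<dots> = 1 - exp (- lam (m,True) * H (m,True) - lam (m,False) * H (m,False))"
      by (simp add: exp_add[symmetric] algebra_simps)
    finally show ?thesis .
  qed
  have "prob ?S = (\<Prod>m = 1..M. 1 - exp (- lam (m,True) * H (m,True) - lam (m,False) * H (m,False)))"
    using SE EP termeq by simp
  then show ?thesis by (simp add: p_def q_def H_def e_def)
qed
end
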